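(* Let $d\ge2$, $\kappa,l,\lambda>0$, $k\in\{0,1\}$, $\mu>0$, $\varphi_o>0$. Suppose $\varphi:[0,\infty)\to(0,\infty)$ is continuous with $\varphi(0)=\varphi_o$, $\lim_{u\to\infty}\varphi(u)=0$, and for all $u\ge0$ $$\int_{\varphi_o}^{\varphi(u)}\frac{d\bar\varphi}{\sqrt{\frac{d(d-1)}{\kappa^2l^2}\mu+k\frac{(d-1)^2}{4l^2}\bar\varphi^2+\lambda\bar\varphi^{\frac{2(d+1)}{d-1}}}}=-l\int_0^u\frac{d\bar u}{\sqrt{1+k\bar u^2+\mu\bar u^{d+1}}}$$ (i.e. the domain wall solution of the conformally coupled scalar with these parameters is regular, $u$ ranging over $[0,\infty)$). Then necessarily $$\lambda<\Big(\frac{(d-1)^d\kappa^2}{2^{d+1}d\,l^{d-1}}\Big)^{\frac2{d-1}}.$$ In particular no such regular solution exists for $d=2$ with $\sqrt\lambda=\kappa^2/(16l)$, nor for $d=3$ with $\lambda=\kappa^2/(6l^2)$. *)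

theory Defs
  imports "HOL-Analysis.Analysis"
begin

end

theory Submission
  imports Defs
begin

lemma lbint_eq_int:
  fixes f :: "real \<Rightarrow> real"
  assumes "a \<le> b" "continuous_on {a..b} f"
  shows "(LBINT x=a..b. f x) = integral {a..b} f"
  using interval_integral_eq_integral[OF assms(1) borel_integrable_atLeastAtMost'[OF assms(2)]] by simp

lemma g_cont:
  fixes mu k :: real and d :: nat
  assumes "mu > 0" "k \<ge> 0" "0 \<le> a"
  shows "continuous_on {a..b} (\<lambda>v. 1/sqrt(1+k * v^2+mu * v^(d+1)))"
proof -
  have "\<forall>v\<in>{a..b}. 1+k * v^2+mu * v^(d+1) > 0"
    using assms by (auto intro!: add_pos_nonneg mult_nonneg_nonneg)
  then show ?thesis
    by (auto intro!: continuous_intros)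
qed

lemma sqrt_deriv: "x > 0 \<Longrightarrow> mu > 0 \<Longrightarrow> ((\<lambda>v::real. -2/sqrt mu/sqrt v) has_real_derivative 1/(sqrt mu * (x * sqrt x))) (at x)"
proof -
  assume x: "x > 0" and m: "mu > 0"
  have D: "((\<lambda>v::real. (-2/sqrt mu) * inverse (sqrt v)) has_real_derivative (-2/sqrt mu) * (- (inverse (sqrt x)/2 * inverse (sqrt x ^ Suc (Suc 0))))) (at x)"
    apply (rule DERIV_cmult, rule DERIV_inverse_fun, rule DERIV_real_sqrt) using x by auto
  have E: "(-2/sqrt mu) * (- (inverse (sqrt x)/2 * inverse (sqrt x ^ Suc (Suc 0)))) = 1/(sqrt mu * (x * sqrt x))"
    using x m by (simp add: field_simps)
  have eqf: "(\<lambda>v::real. -2/sqrt mu/sqrt v) = (\<lambda>v. (-2/sqrt mu) * inverse (sqrt v))"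
    by (simp add: divide_inverse)
  show ?thesis unfolding eqf using D[unfolded E] .
qed

lemma tail:
  fixes mu k :: real and d :: nat
  assumes "mu > 0" "k \<ge> 0" "d \<ge> 2" "1 \<le> u" "u \<le> W"
  shows "integral {u..W} (\<lambda>v. 1/sqrt(1+k * v^2+mu * v^(d+1))) \<le> 2/sqrt(mu * u)"
proof -
  have FTC: "((\<lambda>v. 1/(sqrt mu * (v * sqrt v))) has_integral
      ((\<lambda>v. -2/sqrt mu/sqrt v) W - (\<lambda>v. -2/sqrt mu/sqrt v) u)) {u..W}"
  proof (rule fundamental_theorem_of_calculus[OF assms(5)])
    fix x assume x: "x \<in> {u..W}"
    then have xp: "x > 0" using assms by auto
    show "((\<lambda>v. -2/sqrt mu/sqrt v) has_vector_derivative 1/(sqrt mu * (x * sqrt x))) (at x within {u..W})"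
      unfolding has_real_derivative_iff_has_vector_derivative[symmetric]
      by (rule has_field_derivative_at_within, rule sqrt_deriv) (use xp assms(1) in auto)
  qed
  have le: "1/sqrt(1+k * v^2+mu * v^(d+1)) \<le> 1/(sqrt mu * (v * sqrt v))" if v: "v \<in> {u..W}" for v
  proof -
    have v1: "v \<ge> 1" using v assms by auto
    have "v^3 \<le> v^(d+1)" using v1 assms(3) by (intro power_increasing) auto
    then have "mu * v^3 \<le> mu * v^(d+1)" using assms(1) by (intro mult_left_mono) auto
    moreover have "0 \<le> k * v^2" using assms(2) by simp
    ultimately have "mu * v^3 \<le> 1+k * v^2+mu * v^(d+1)" by linarith
    then have s1: "sqrt (mu * v^3) \<le> sqrt(1+k * v^2+mu * v^(d+1))" by simp
    have s2: "sqrt (mu * v^3) = sqrt mu * (v * sqrt v)" using v1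
      by (simp add: real_sqrt_mult power3_eq_cube)
    have s3: "sqrt mu * (v * sqrt v) > 0" using v1 assms by simp
    have s4: "sqrt(1+k * v^2+mu * v^(d+1)) > 0" using s1 s2 s3 by linarith
    show ?thesis using s1 s2 s3 s4 by (intro divide_left_mono) auto
  qed
  have "integral {u..W} (\<lambda>v. 1/sqrt(1+k * v^2+mu * v^(d+1))) \<le> integral {u..W} (\<lambda>v. 1/(sqrt mu * (v * sqrt v)))"
    apply (rule integral_le)
    apply (rule integrable_continuous_interval, rule g_cont) using assms apply auto[3]
    apply (rule has_integral_integrable[OF FTC])
    using le by auto
  also have "\<dots> = 2/sqrt mu/sqrt u - 2/sqrt mu/sqrt W"
    using integral_unique[OF FTC] by simp
  also have "\<dots> \<le> 2/sqrt mu/sqrt u" using assms by simp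
  also have "\<dots> = 2/sqrt(mu * u)" by (simp add: real_sqrt_mult)
  finally show ?thesis .
qed

lemma key:
  fixes x a s A Bk lc k mu e r l :: real and d :: nat
  assumes x: "x > 0" and a: "a > 0" and s: "s > 0" and A: "A = mu * s" and B: "Bk * a^2 = k * s"
    and L: "lc * a powr r = s" and er: "e * r = real d + 1" and e2: "2 * e = real d - 1"
    and ae: "a * e = l * sqrt s" and k: "k \<ge> 0" and mu: "mu > 0"
  shows "(-(a*e) * x powr (-e-1)) * (1 / sqrt (A + Bk * (a * x powr (-e))^2 + lc * (a * x powr (-e)) powr r))
     = -l * (1/sqrt(1 + k * x^2 + mu * x^(d+1)))"
proof -
  define Q where "Q = x powr e"
  have Q: "Q > 0" using x by (simp add: Q_def)
  have m1: "x powr (-e) = 1/Q" using x by (simp add: Q_def powr_minus divide_inverse)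
  have m2: "x powr (-e-1) = 1/(Q*x)" using x
    by (simp add: Q_def powr_diff powr_minus divide_inverse)
  define X where "X = x^(d+1)"
  have X1: "Q powr r = X" using x er
    by (simp add: Q_def X_def powr_powr powr_add flip: powr_realpow)
  have X2: "X = (Q*x)^2" using x e2
  proof -
    have "(Q*x)^2 = (x powr e * x powr e) * x powr 2" using x
      by (simp add: Q_def power2_eq_square)
    also have "\<dots> = x powr (2*e) * x powr 2" by (metis mult_2 powr_add)
    also have "\<dots> = x powr (2*e+2)" by (rule powr_add[symmetric])
    also have "\<dots> = x powr (real (d+1))" using e2 by simp
    also have "\<dots> = X" using powr_realpow[OF x, of "d+1"] by (simp only: X_def)
    finally show ?thesis by simp
  qed
  have G: "1 + k * x^2 + mu * X > 0" using x k mu by (simp add: X_def add_pos_nonneg)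
  have "A + Bk * (a * x powr (-e))^2 + lc * (a * x powr (-e)) powr r
       = mu * s + k * s / Q^2 + s / X"
    using a Q L B A X1 by (simp add: m1 powr_divide power_divide field_simps)
  also have "\<dots> = s * (1 + k * x^2 + mu * X) / (Q*x)^2"
    using Q x X2 by (simp add: field_simps)
  finally have inner: "A + Bk * (a * x powr (-e))^2 + lc * (a * x powr (-e)) powr r
       = s * (1 + k * x^2 + mu * X) / (Q*x)^2" .
  have sq: "sqrt (s * (1 + k * x^2 + mu * X) / (Q*x)^2) = sqrt s * sqrt (1 + k * x^2 + mu * X) / (Q*x)"
    using Q x by (simp add: real_sqrt_divide real_sqrt_mult)
  show ?thesis
    unfolding inner sq m2 X_def[symmetric] using Q x s G ae[symmetric]
    by (simp add: field_simps)
qed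

lemma F_cont:
  fixes A B lm r :: real
  assumes "A > 0" "B \<ge> 0" "lm \<ge> 0"
  shows "continuous_on {0<..} (\<lambda>p. 1 / sqrt (A + B * p^2 + lm * p powr r))"
proof -
  have "\<forall>p\<in>{0<..}. A + B * p^2 + lm * p powr r > 0"
    using assms by (auto intro!: add_pos_nonneg)
  then show ?thesis
    apply (auto intro!: continuous_intros)
    by (metis greaterThan_iff less_irrefl)
qed

lemma crit:
  fixes kap l :: real and d :: nat
  assumes d: "d \<ge> 2" and kap: "kap > 0" and l: "l > 0"
  defines "s \<equiv> real d * (real d - 1) / (kap^2 * l^2)"
  defines "a \<equiv> 2 * l * sqrt s / (real d - 1)"
  shows "((real d - 1)^d * kap^2 / (2^(d+1) * real d * l^(d-1))) powr (2 / (real d - 1))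
          * a powr (2 * (real d + 1) / (real d - 1)) = s"
proof -
  define D where "D = real d"
  have D1: "D - 1 > 0" using d by (simp add: D_def)
  have Dp: "D > 0" using D1 by simp
  have dm1: "real (d-1) = D - 1" using d by (simp add: D_def of_nat_diff)
  have sp: "s > 0" using D1 Dp kap l by (simp add: s_def D_def[symmetric])
  have ap: "a > 0" using sp D1 l by (simp add: a_def D_def[symmetric])
  define base where "base = (real d - 1)^d * kap^2 / (2^(d+1) * real d * l^(d-1))"
  have bp: "base > 0" using D1 Dp kap l by (simp add: base_def D_def[symmetric])
  have lnb: "ln base = D * ln (D-1) + 2 * ln kap - (D+1) * ln 2 - ln D - (D-1) * ln l"
    using D1 Dp kap l unfolding base_def D_def[symmetric]
    by (simp add: ln_mult ln_div ln_realpow dm1 D_def algebra_simps)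
  have lns: "ln s = ln D + ln (D-1) - 2 * ln kap - 2 * ln l"
    using D1 Dp kap l unfolding s_def D_def[symmetric]
    by (simp add: ln_mult ln_div ln_realpow)
  have lna: "ln a = ln 2 + ln l + ln s / 2 - ln (D-1)"
    using D1 sp l unfolding a_def D_def[symmetric]
    by (simp add: ln_mult ln_div ln_sqrt)
  have "ln (base powr (2 / (D - 1)) * a powr (2 * (D + 1) / (D - 1)))
     = 2 / (D-1) * ln base + 2 * (D + 1) / (D - 1) * ln a"
    using bp ap by (simp add: ln_mult ln_powr)
  also have "\<dots> = ln s"
  proof -
    have "2 * ln base + 2 * (D + 1) * ln a = (D - 1) * ln s"
      unfolding lnb lna lns by (simp add: field_simps)
    moreover have "2 / (D-1) * ln base + 2 * (D + 1) / (D - 1) * ln a = (2 * ln base + 2 * (D + 1) * ln a) / (D - 1)"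
      by (simp only: times_divide_eq_left add_divide_distrib)
    ultimately show ?thesis using D1 by simp
  qed
  finally have "ln (base powr (2 / (D - 1)) * a powr (2 * (D + 1) / (D - 1))) = ln s" .
  then have "base powr (2 / (D - 1)) * a powr (2 * (D + 1) / (D - 1)) = s"
    using bp ap sp by (simp add: ln_inj_iff)
  then show ?thesis by (simp add: base_def D_def)
qed
lemma er_aux: "(D::real) - 1 > 0 \<Longrightarrow> (D - 1) / 2 * (2 * (D + 1) / (D - 1)) = D + 1"
  by (simp add: field_simps)

lemma part2_aux: assumes d2: "d = (2::nat)" and l: "l > 0" and kap: "kap > (0::real)" and lam: "lam > 0"
  and main: "lam < ((real d - 1)^d * kap^2 / (2^(d+1) * real d * l^(d-1))) powr (2 / (real d - 1))"
  shows "sqrt lam \<noteq> kap^2 / (16 * l)"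
proof -
  have "((real d - 1)^d * kap^2 / (2^(d+1) * real d * l^(d-1))) = kap^2 / (16 * l)"
    using d2 by simp
  moreover have "2 / (real d - 1) = 2" using d2 by simp
  ultimately have "lam < (kap^2 / (16 * l)) ^ 2" using main l by simp
  then have "sqrt lam < sqrt ((kap^2 / (16 * l)) ^ 2)" by (simp only: real_sqrt_less_iff)
  also have "\<dots> = kap^2 / (16 * l)" using l by simp
  finally show ?thesis by simp
qed
lemma part3_aux: assumes d3: "d = (3::nat)" and l: "l > 0" and kap: "kap > (0::real)" and lam: "lam > 0"
  and main: "lam < ((real d - 1)^d * kap^2 / (2^(d+1) * real d * l^(d-1))) powr (2 / (real d - 1))"
  shows "lam \<noteq> kap^2 / (6 * l^2)"
proof -
  have "((real d - 1)^d * kap^2 / (2^(d+1) * real d * l^(d-1))) = kap^2 / (6 * l^2)"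
    using d3 by simp
  moreover have "2 / (real d - 1) = 1" using d3 by simp
  ultimately have "lam < kap^2 / (6 * l^2)" using main l by simp
  then show ?thesis by simp
qed

theorem mainTheorem11:
  fixes d :: nat and kap l lam mu phio :: real and k :: real and phi :: "real \<Rightarrow> real"
  assumes "d \<ge> 2" and "kap > 0" and "l > 0" and "lam > 0" and "k \<in> {0, 1}"
    and "mu > 0" and "phio > 0"
    and "continuous_on {0..} phi"
    and "\<forall>u\<ge>0. phi u > 0"
    and "phi 0 = phio"
    and "(phi \<longlongrightarrow> 0) at_top"
    and "\<forall>u\<ge>0.
      (LBINT p=phio..phi u. 1 / sqrt (real d * (real d - 1) / (kap^2 * l^2) * mu
          + k * (real d - 1)^2 / (4 * l^2) * p^2
          + lam * p powr (2 * (real d + 1) / (real d - 1))))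
      = - l * (LBINT v=0..u. 1 / sqrt (1 + k * v^2 + mu * v^(d+1)))"
  shows "lam < ((real d - 1)^d * kap^2 / (2^(d+1) * real d * l^(d-1))) powr (2 / (real d - 1))
    \<and> (d = 2 \<longrightarrow> sqrt lam \<noteq> kap^2 / (16 * l))
    \<and> (d = 3 \<longrightarrow> lam \<noteq> kap^2 / (6 * l^2))"
proof -
  define s where "s = real d * (real d - 1) / (kap^2 * l^2)"
  define a where "a = 2 * l * sqrt s / (real d - 1)"
  define e where "e = (real d - 1) / 2"
  define Bd where "Bd = ((real d - 1)^d * kap^2 / (2^(d+1) * real d * l^(d-1))) powr (2 / (real d - 1))"
  define A where "A = real d * (real d - 1) / (kap^2 * l^2) * mu"
  define Bk where "Bk = k * (real d - 1)^2 / (4 * l^2)"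
  define r where "r = 2 * (real d + 1) / (real d - 1)"
  define F where "F = (\<lambda>lm p. 1 / sqrt (A + Bk * p^2 + lm * p powr r))"
  define G where "G = (\<lambda>v::real. 1 / sqrt (1 + k * v^2 + mu * v^(d+1)))"
  have k0: "k \<ge> 0" using assms(5) by auto
  have D1: "real d - 1 > 0" using assms(1) by simp
  have sp: "s > 0" using D1 assms(2,3) by (simp add: s_def)
  have ap: "a > 0" using sp D1 assms(3) by (simp add: a_def)
  have ep: "e > 0" using D1 by (simp add: e_def)
  have Ap: "A > 0" using sp assms(6) by (simp add: A_def s_def[symmetric])
  have Bk0: "Bk \<ge> 0" using k0 by (simp add: Bk_def)
  have Bdp: "Bd > 0" using D1 assms(2,3) by (simp add: Bd_def)
  have H: "\<forall>u\<ge>0. (LBINT p=phio..phi u. F lam p) = - l * (LBINT v=0..u. G v)"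
    using assms(12) by (simp add: F_def G_def A_def Bk_def r_def)
  have crit': "Bd * a powr r = s"
    using crit[OF assms(1,2,3)] by (simp add: Bd_def a_def s_def r_def)
  have Bka: "Bk * a^2 = k * s"
    using D1 assms(3) sp by (simp add: Bk_def a_def power_mult_distrib power_divide field_simps)
  have er: "e * r = real d + 1" using er_aux[OF D1] by (simp add: e_def r_def)
  have e2: "2 * e = real d - 1" by (simp add: e_def)
  have ae: "a * e = l * sqrt s" using D1 by (simp add: a_def e_def)
  have keyid: "(-(a*e) * x powr (-e-1)) * F Bd (a * x powr (-e)) = -l * G x" if "x > 0" for x
    unfolding F_def G_def
    by (rule key[OF that ap sp _ Bka crit' er e2 ae k0 assms(6)]) (simp add: A_def s_def)
  have Fcont: "continuous_on {0<..} (F lm)" if "lm \<ge> 0" for lm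
    unfolding F_def using F_cont[OF Ap Bk0 that] by simp
  have Fle: "F lam p \<le> F Bd p" if "p > 0" "Bd \<le> lam" for p
  proof -
    have "A + Bk * p^2 + Bd * p powr r > 0" using Ap Bk0 Bdp that by (simp add: add_pos_nonneg)
    moreover have "Bd * p powr r \<le> lam * p powr r" using that by (intro mult_right_mono) auto
    ultimately show ?thesis unfolding F_def
      by (intro divide_left_mono) (auto intro: mult_pos_pos)
  qed
  have Gcont: "continuous_on {x..y} G" if "x \<ge> 0" for x y
    unfolding G_def using g_cont[OF assms(6) k0 that] .
  have Gpos: "G v > 0" if "v \<ge> 0" for v
    using that k0 assms(6) by (simp add: G_def add_pos_nonneg)
  have main: "lam < Bd"
  proof (rule ccontr)
    assume "\<not> lam < Bd"
    then have lb: "Bd \<le> lam" by simp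
    define Psi where "Psi = (\<lambda>x. a * x powr (-e))"
    define Psi' where "Psi' = (\<lambda>x. -(a*e) * x powr (-e-1))"
    define v0 where "v0 = (a / phio) powr (1/e)"
    have v0p: "v0 > 0" using ap assms(7) by (simp add: v0_def)
    have Psiinv: "Psi ((a / y) powr (1/e)) = y" if "y > 0" for y
      using that ap ep by (simp add: Psi_def powr_powr powr_minus_divide)
    have Psiv0: "Psi v0 = phio" using Psiinv[OF assms(7)] by (simp add: v0_def)
    define c0 where "c0 = integral {0..v0} G"
    have c0p: "c0 > 0"
    proof -
      have "G v0 \<le> G v" if "v \<in> {0..v0}" for v
      proof -
        have "v^2 \<le> v0^2" using that by (intro power_mono) auto
        moreover have "v^(d+1) \<le> v0^(d+1)" using that by (intro power_mono) auto
        ultimately have "1 + k * v^2 + mu * v^(d+1) \<le> 1 + k * v0^2 + mu * v0^(d+1)"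
          using k0 assms(6) by (intro add_mono mult_left_mono) auto
        moreover have "1 + k * v^2 + mu * v^(d+1) > 0" using that k0 assms(6) by (simp add: add_pos_nonneg)
        ultimately show ?thesis unfolding G_def
          by (intro divide_left_mono) (auto intro: mult_pos_pos)
      qed
      then have "integral {0..v0} (\<lambda>_. G v0) \<le> c0"
        unfolding c0_def
        by (intro integral_le integrable_continuous_interval Gcont) auto
      moreover have "integral {0..v0} (\<lambda>_. G v0) = v0 * G v0" using v0p by simp
      moreover have "v0 * G v0 > 0" using v0p Gpos[of v0] by simp
      ultimately show ?thesis by linarith
    qed
    define M where "M = max (max 1 v0) ((2/c0)^2/mu + 1)"
    have ev: "eventually (\<lambda>u. phi u < phio \<and> u \<ge> M) at_top"
      using order_tendstoD(2)[OF assms(11) assms(7)] eventually_ge_at_top[of M]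
      by (rule eventually_conj)
    then obtain N where N: "\<And>u. u \<ge> N \<Longrightarrow> phi u < phio \<and> u \<ge> M"
      by (auto simp: eventually_at_top_linorder)
    define u where "u = max N M"
    have uphi: "phi u < phio" and uM: "u \<ge> M" using N[of u] by (auto simp: u_def)
    have u1: "u \<ge> 1" and uv0: "u \<ge> v0" and uc: "u \<ge> (2/c0)^2/mu + 1"
      using uM by (auto simp: M_def)
    have u0: "u \<ge> 0" using u1 by simp
    have phiu: "phi u > 0" using assms(9) u0 by simp
    define w where "w = (a / phi u) powr (1/e)"
    have Psiw: "Psi w = phi u" using Psiinv[OF phiu] by (simp add: w_def)
    have wv0: "v0 < w" unfolding w_def v0_def
      using ap ep phiu uphi assms(7) by (intro powr_less_mono2) (auto simp: divide_strict_left_mono)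
    have wp: "w > 0" using wv0 v0p by simp
    have contBd: "continuous_on {0<..} (F Bd)" using Fcont Bdp by simp
    have contlam: "continuous_on {0<..} (F lam)" using Fcont assms(4) by simp
    have sub: "(LBINT x=v0..w. Psi' x *\<^sub>R F Bd (Psi x)) = (LBINT y=Psi v0..Psi w. F Bd y)"
    proof (rule interval_integral_substitution_finite)
      show "v0 \<le> w" using wv0 by simp
      fix x assume x: "v0 \<le> x" "x \<le> w"
      then have xp: "x > 0" using v0p by simp
      have d1: "((\<lambda>z. z powr (-e)) has_real_derivative (-e) * x powr (-e-1)) (at x)"
        using has_real_derivative_powr[OF xp, of "-e"] by simp
      have d2: "(Psi has_real_derivative a * ((-e) * x powr (-e-1))) (at x)"
        unfolding Psi_def by (rule DERIV_cmult[OF d1])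
      have d3: "a * ((-e) * x powr (-e-1)) = Psi' x" by (simp add: Psi'_def)
      show "(Psi has_real_derivative Psi' x) (at x within {v0..w})"
        using has_field_derivative_at_within[OF d2] unfolding d3 .
    next
      have "Psi ` {v0..w} \<subseteq> {0<..}" using v0p ap by (auto simp: Psi_def)
      then show "continuous_on (Psi ` {v0..w}) (F Bd)" using contBd continuous_on_subset by blast
    next
      have "\<forall>x\<in>{v0..w}. x \<noteq> 0" using v0p by auto
      then show "continuous_on {v0..w} Psi'" unfolding Psi'_def
        by (intro continuous_on_mult continuous_on_const continuous_on_powr continuous_on_id)
    qed
    have lhs: "(LBINT x=v0..w. Psi' x *\<^sub>R F Bd (Psi x)) = (LBINT x=v0..w. -l * G x)"
    proof (rule interval_integral_cong)
      fix x assume x: "x \<in> einterval (min (ereal v0) (ereal w)) (max (ereal v0) (ereal w))"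
      have "min (ereal v0) (ereal w) = ereal v0" using wv0 by (simp add: min_def)
      then have "x > 0" using x v0p by (auto simp: einterval_iff)
      then show "Psi' x *\<^sub>R F Bd (Psi x) = -l * G x"
        using keyid[of x] by (simp add: Psi_def Psi'_def)
    qed
    have I1: "(LBINT x=v0..w. -l * G x) = -l * integral {v0..w} G"
    proof -
      have "(LBINT x=v0..w. -l * G x) = integral {v0..w} (\<lambda>x. -l * G x)"
        using wv0 v0p by (intro lbint_eq_int) (auto intro!: continuous_intros Gcont)
      then show ?thesis by simp
    qed
    have I2: "(LBINT y=Psi v0..Psi w. F Bd y) = - integral {phi u..phio} (F Bd)"
    proof -
      have "(LBINT y=phio..phi u. F Bd y) = - (LBINT y=phi u..phio. F Bd y)"
        by (rule interval_integral_endpoints_reverse)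
      also have "(LBINT y=phi u..phio. F Bd y) = integral {phi u..phio} (F Bd)"
        using uphi phiu by (intro lbint_eq_int) (auto intro: continuous_on_subset[OF contBd])
      finally show ?thesis by (simp add: Psiv0 Psiw)
    qed
    have E1: "integral {phi u..phio} (F Bd) = l * integral {v0..w} G"
      using sub lhs I1 I2 by simp
    have E2: "integral {phi u..phio} (F lam) = l * integral {0..u} G"
    proof -
      have "(LBINT y=phio..phi u. F lam y) = - (LBINT y=phi u..phio. F lam y)"
        by (rule interval_integral_endpoints_reverse)
      also have "(LBINT y=phi u..phio. F lam y) = integral {phi u..phio} (F lam)"
        using uphi phiu by (intro lbint_eq_int) (auto intro: continuous_on_subset[OF contlam])
      finally have a1: "(LBINT y=phio..phi u. F lam y) = - integral {phi u..phio} (F lam)" .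
      have a2: "(LBINT v=0..u. G v) = integral {0..u} G"
        using lbint_eq_int[OF u0 Gcont[of 0 u]] by (simp add: zero_ereal_def)
      show ?thesis using H u0 a1 a2 by auto
    qed
    have "integral {phi u..phio} (F lam) \<le> integral {phi u..phio} (F Bd)"
      apply (rule integral_le)
      apply (rule integrable_continuous_interval, rule continuous_on_subset[OF contlam]) using phiu apply auto[1]
      apply (rule integrable_continuous_interval, rule continuous_on_subset[OF contBd]) using phiu apply auto[1]
      using Fle lb phiu by auto
    then have le1: "integral {0..u} G \<le> integral {v0..w} G"
      using E1 E2 assms(3) by simp
    have Gint: "G integrable_on {x..y}" if "x \<ge> 0" for x y
      by (rule integrable_continuous_interval, rule Gcont[OF that])
    have split1: "integral {0..u} G = c0 + integral {v0..u} G"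
      unfolding c0_def using Henstock_Kurzweil_Integration.integral_combine[where a=0 and c=v0 and b=u and f=G] Gint[of 0 u] uv0 v0p by simp
    have split2: "integral {v0..w} G \<le> integral {v0..u} G + 2 / sqrt (mu * u)"
    proof (cases "w \<le> u")
      case True
      have "integral {v0..w} G + integral {w..u} G = integral {v0..u} G"
        using Henstock_Kurzweil_Integration.integral_combine[where a=v0 and c=w and b=u and f=G] Gint[of v0 u] True wv0 v0p by simp
      moreover have "integral {w..u} G \<ge> 0"
        using integral_nonneg[of G "{w..u}"] Gint[of w u] wp Gpos by (simp add: less_imp_le)
      moreover have "2 / sqrt (mu * u) \<ge> 0" using assms(6) u0 by simp
      ultimately show ?thesis by linarith
    next
      case False
      have "integral {v0..u} G + integral {u..w} G = integral {v0..w} G"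
        using Henstock_Kurzweil_Integration.integral_combine[where a=v0 and c=u and b=w and f=G] Gint[of v0 w] False uv0 v0p by simp
      moreover have "integral {u..w} G \<le> 2 / sqrt (mu * u)"
        unfolding G_def using tail[OF assms(6) k0 assms(1) u1, of w] False by simp
      ultimately show ?thesis by linarith
    qed
    have "c0 \<le> 2 / sqrt (mu * u)" using le1 split1 split2 by linarith
    moreover have "2 / sqrt (mu * u) < c0"
    proof -
      have "(2/c0)^2 < mu * u"
      proof -
        have "(2/c0)^2 / mu < u" using uc by linarith
        then have "(2/c0)^2 < u * mu" using pos_divide_less_eq[OF assms(6)] by blast
        then show ?thesis by (metis mult.commute)
      qed
      then have "2/c0 < sqrt (mu * u)" by (rule real_less_rsqrt)
      moreover have sq0: "sqrt (mu * u) > 0" using assms(6) u1 by simp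
      ultimately have "2 < c0 * sqrt (mu * u)" using c0p by (simp add: field_simps)
      then show ?thesis using pos_divide_less_eq[OF sq0] by simp
    qed
    ultimately show False by linarith
  qed
  have mainB: "lam < ((real d - 1)^d * kap^2 / (2^(d+1) * real d * l^(d-1))) powr (2 / (real d - 1))"
    using main by (simp add: Bd_def)
  have part2: "d = 2 \<longrightarrow> sqrt lam \<noteq> kap^2 / (16 * l)"
    using part2_aux[OF _ assms(3,2,4) mainB] by blast
  have part3: "d = 3 \<longrightarrow> lam \<noteq> kap^2 / (6 * l^2)"
    using part3_aux[OF _ assms(3,2,4) mainB] by blast
  show ?thesis using main part2 part3 by (simp add: Bd_def)
qed

end
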